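(* Let $p_0,q_0>0$ and let $\tilde\Delta(p_0,q_0)=\{(p,q):\ 0<p\le p_0,\ 0<q\le q_0,\ q_0/p_0\le q/p\}$. (1) If $x,y$ are real sequences tending to $0$ with $x\lessgtr y$ and $\|x\|_{\ell(p_0,q_0)}\ge\|y\|_{\ell(p_0,q_0)}$ (resp. $>$), then for every $(p,q)\in\tilde\Delta(p_0,q_0)$ we have $\|x\|_{\ell(p,q)}\ge\|y\|_{\ell(p,q)}$ (resp. $>$). (2) Conversely, if $(p,q)\notin\tilde\Delta(p_0,q_0)$ (with $p,q>0$), then there exist sequences $x,y$, each having at most two nonzero entries, such that $x\lessgtr y$, $\|x\|_{\ell(p_0,q_0)}>\|y\|_{\ell(p_0,q_0)}$ and $\|x\|_{\ell(p,q)}<\|y\|_{\ell(p,q)}$.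
   Context: For a real sequence $x=(x_n)_{n\ge1}$ tending to $0$, $x^*=(x_n^* )$ is the nonincreasing permutation of $(|x_n|)$. For $p,q>0$, $\|x\|_{\ell(p,q)}=\bigl(\sum_{n=1}^\infty(x_n^* )^q n^{q/p-1}\bigr)^{1/q}$. We write $x\lessgtr y$ (equivalently $y\gtrless x$) if there is $n_0\in\mathbb N$ with $x_n^*\le y_n^*$ for $n\le n_0$ and $x_n^*\ge y_n^*$ for $n>n_0$. *)

theory Defs
  imports "HOL-Analysis.Analysis"
begin

text \<open>Sequences x = (x_1, x_2, ...) are represented 0-based: x_k is stored as x (k-1).
  dec_rearr x n is the (n+1)-st term of the nonincreasing rearrangement x^* of (|x_k|),
  defined via the distribution function (standard for sequences tending to 0).\<close>

definition dec_rearr :: "(nat \<Rightarrow> real) \<Rightarrow> nat \<Rightarrow> real" where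
  "dec_rearr x n = Inf {t. 0 \<le> t \<and> finite {k. t < \<bar>x k\<bar>} \<and> card {k. t < \<bar>x k\<bar>} \<le> n}"

definition lorentz_norm :: "real \<Rightarrow> real \<Rightarrow> (nat \<Rightarrow> real) \<Rightarrow> ereal" where
  "lorentz_norm p q x =
     (let f = (\<lambda>n. dec_rearr x n powr q * real (Suc n) powr (q / p - 1))
      in if summable f then ereal (suminf f powr (1 / q)) else \<infinity>)"

text \<open>x \<lessgtr> y: there is n0 \<in> \<nat> (n0 \<ge> 1) with x^*_m \<le> y^*_m for m \<le> n0 and
  x^*_m \<ge> y^*_m for m > n0 (1-based m; here n = m - 1).\<close>

definition lessgtr :: "(nat \<Rightarrow> real) \<Rightarrow> (nat \<Rightarrow> real) \<Rightarrow> bool" where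
  "lessgtr x y \<longleftrightarrow> (\<exists>n0::nat. n0 \<ge> 1 \<and>
      (\<forall>n. n < n0 \<longrightarrow> dec_rearr x n \<le> dec_rearr y n) \<and>
      (\<forall>n. n \<ge> n0 \<longrightarrow> dec_rearr x n \<ge> dec_rearr y n))"

definition tDelta :: "real \<Rightarrow> real \<Rightarrow> (real \<times> real) set" where
  "tDelta p0 q0 = {(p, q). 0 < p \<and> p \<le> p0 \<and> 0 < q \<and> q \<le> q0 \<and> q0 / p0 \<le> q / p}"

end

theory Submission
  imports Defs
begin


lemma tangent_powr:
  fixes A B r :: real
  assumes A: "0 < A" and B: "0 \<le> B" and r: "0 < r" "r \<le> 1"
  shows "B powr r \<le> A powr r + r * A powr (r - 1) * (B - A)"
proof (cases "B = 0")
  case True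
  have "A powr (r - 1) * A = A powr r" using A by (simp add: powr_diff)
  then have "A powr r + r * A powr (r - 1) * (B - A) = (1 - r) * A powr r"
    using True by (simp add: algebra_simps)
  also have "\<dots> \<ge> 0" using r by simp
  finally show ?thesis using True r by simp
next
  case False
  then have Bp: "B > 0" using B by simp
  have Y: "B powr r * A powr (1 - r) \<le> r * B + (1 - r) * A"
    using Youngs_inequality_0[of r "1 - r" B A] r A Bp by simp
  have "B powr r = (B powr r * A powr (1 - r)) * A powr (r - 1)"
    using A by (simp add: mult.assoc flip: powr_add)
  also have "\<dots> \<le> (r * B + (1 - r) * A) * A powr (r - 1)"
    using Y by (rule mult_right_mono) simp
  also have "\<dots> = A powr r + r * A powr (r - 1) * (B - A)"
  proof -
    have "A powr (r - 1) * A = A powr r" using A by (simp add: powr_diff)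
    then show ?thesis by (simp add: algebra_simps)
  qed
  finally show ?thesis .
qed

definition FF :: "real \<Rightarrow> real \<Rightarrow> (nat \<Rightarrow> real) \<Rightarrow> nat \<Rightarrow> real" where
  "FF p q a n = a n powr q * real (Suc n) powr (q / p - 1)"

lemma lorentz_norm_FF:
  "lorentz_norm p q x = (if summable (FF p q (dec_rearr x)) then ereal (suminf (FF p q (dec_rearr x)) powr (1/q)) else \<infinity>)"
  unfolding lorentz_norm_def FF_def Let_def by simp

lemma FF_nonneg: "FF p q a n \<ge> 0"
  unfolding FF_def by simp



lemma core_term:
  fixes a b :: "nat \<Rightarrow> real"
  assumes ann: "\<And>n. 0 \<le> a n" and bnn: "\<And>n. 0 \<le> b n"
    and amono: "\<And>m n. m \<le> n \<Longrightarrow> a n \<le> a m"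
    and lo: "\<And>n. n < n0 \<Longrightarrow> a n \<le> b n"
    and hi: "\<And>n. n \<ge> n0 \<Longrightarrow> b n \<le> a n"
    and pos: "0 < a n0"
    and pq: "0 < p" "0 < q" "0 < p0" "0 < q0" "q \<le> q0" "q0 / p0 \<le> q / p"
  defines "K \<equiv> (q/q0) * (a n0 powr q0) powr (q/q0 - 1) * real (Suc n0) powr (q/p - q0/p0)"
  shows "K > 0" "FF p q a n - FF p q b n \<ge> K * (FF p0 q0 a n - FF p0 q0 b n)"
proof -
  show "K > 0" unfolding K_def using pos pq by simp
  define r where "r = q / q0"
  define A where "A = a n powr q0"
  define B where "B = b n powr q0"
  define A0 where "A0 = a n0 powr q0"
  define w where "w = real (Suc n) powr (q0/p0 - 1)"
  define c where "c = real (Suc n) powr (q/p - q0/p0)"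
  define c0 where "c0 = real (Suc n0) powr (q/p - q0/p0)"
  have K: "K = r * A0 powr (r - 1) * c0" unfolding K_def r_def A0_def c0_def by simp
  have r: "0 < r" "r \<le> 1" using pq by (auto simp: r_def)
  have Ar: "a n powr q = A powr r" unfolding A_def r_def using pq by (simp add: powr_powr)
  have Br: "b n powr q = B powr r" unfolding B_def r_def using pq by (simp add: powr_powr)
  have v: "real (Suc n) powr (q/p - 1) = w * c" unfolding w_def c_def by (simp flip: powr_add)
  have w: "w > 0" unfolding w_def by simp
  have c: "c > 0" unfolding c_def by simp
  have AB: "0 \<le> A" "0 \<le> B" unfolding A_def B_def by auto
  have A0: "A0 > 0" unfolding A0_def using pos by simp
  define T where "T = r * A powr (r - 1) * c"
  have LHS: "FF p q a n - FF p q b n = (A powr r - B powr r) * w * c"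
    unfolding FF_def Ar Br v by (simp add: algebra_simps)
  have RHS: "K * (FF p0 q0 a n - FF p0 q0 b n) = K * (A - B) * w"
    unfolding FF_def A_def B_def w_def by (simp add: algebra_simps)
  show "FF p q a n - FF p q b n \<ge> K * (FF p0 q0 a n - FF p0 q0 b n)"
  proof (cases "A = 0")
    case True
    then have an: "a n = 0" unfolding A_def using ann[of n] by simp
    have "n \<ge> n0"
    proof (rule ccontr)
      assume "\<not> n \<ge> n0"
      then have "a n0 \<le> a n" using amono by simp
      then show False using an pos by simp
    qed
    then have "b n = 0" using hi[of n] an bnn[of n] by simp
    then have "B = 0" unfolding B_def by simp
    then show ?thesis unfolding LHS RHS using True r by simp
  next
    case False
    then have Ap: "A > 0" using AB by simp
    have tan: "A powr r - B powr r \<ge> r * A powr (r - 1) * (A - B)"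
      using tangent_powr[OF Ap AB(2) r] by (simp add: algebra_simps)
    have step1: "(A powr r - B powr r) * w * c \<ge> T * (A - B) * w"
    proof -
      have "(A powr r - B powr r) * (w * c) \<ge> r * A powr (r - 1) * (A - B) * (w * c)"
        using tan w c by (intro mult_right_mono) auto
      then show ?thesis unfolding T_def by (simp add: algebra_simps)
    qed
    have step2: "T * (A - B) \<ge> K * (A - B)"
    proof (cases "n < n0")
      case True
      have "a n0 \<le> a n" using amono True by simp
      then have AA0: "A0 \<le> A" unfolding A_def A0_def using pq ann by (intro powr_mono2) auto
      have e1: "A powr (r - 1) \<le> A0 powr (r - 1)"
        using powr_mono2'[of "r - 1" A0 A] r A0 AA0 by simp
      have e2: "c \<le> c0" unfolding c_def c0_def using True pq
        by (intro powr_mono2) auto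
      have "T \<le> K" unfolding T_def K using e1 e2 r c A0
        by (intro mult_mono) auto
      moreover have "A - B \<le> 0" unfolding A_def B_def using lo[OF True] ann pq
        by (simp add: powr_mono2)
      ultimately show ?thesis by (simp add: mult_right_mono_neg)
    next
      case False
      then have nn: "n0 \<le> n" by simp
      then have "a n \<le> a n0" using amono by simp
      then have AA0: "A \<le> A0" unfolding A_def A0_def using pq ann by (intro powr_mono2) auto
      have e1: "A0 powr (r - 1) \<le> A powr (r - 1)"
        using powr_mono2'[of "r - 1" A A0] r Ap AA0 by simp
      have e2: "c0 \<le> c" unfolding c_def c0_def using nn pq
        by (intro powr_mono2) auto
      have "K \<le> T" unfolding T_def K using e1 e2 r c A0 c0_def
        by (intro mult_mono) auto
      moreover have "A - B \<ge> 0" unfolding A_def B_def using hi[OF nn] bnn pq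
        by (simp add: powr_mono2)
      ultimately show ?thesis by (simp add: mult_right_mono)
    qed
    have "K * (A - B) * w \<le> T * (A - B) * w" using mult_right_mono[OF step2, of w] w by simp
    then show ?thesis unfolding LHS RHS using step1 by linarith
  qed
qed



lemma tail_summable:
  assumes "summable (FF p q a)" and "\<And>n. 0 \<le> b n" and "\<And>n. n \<ge> n0 \<Longrightarrow> b n \<le> a n"
    and "0 < q"
  shows "summable (FF p q b)"
proof (rule summable_comparison_test'[OF assms(1)])
  fix n assume "n0 \<le> n"
  then have "b n powr q \<le> a n powr q" using assms by (intro powr_mono2) auto
  then show "norm (FF p q b n) \<le> FF p q a n"
    unfolding FF_def by (simp add: mult_right_mono)
qed

lemma comp_sums:
  fixes a b :: "nat \<Rightarrow> real"
  assumes ann: "\<And>n. 0 \<le> a n" and bnn: "\<And>n. 0 \<le> b n"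
    and amono: "\<And>m n. m \<le> n \<Longrightarrow> a n \<le> a m"
    and lo: "\<And>n. n < n0 \<Longrightarrow> a n \<le> b n"
    and hi: "\<And>n. n \<ge> n0 \<Longrightarrow> b n \<le> a n"
    and pq: "0 < p" "0 < q" "0 < p0" "0 < q0" "q \<le> q0" "q0 / p0 \<le> q / p"
    and s: "summable (FF p0 q0 a)" "summable (FF p0 q0 b)" "summable (FF p q a)" "summable (FF p q b)"
  shows "suminf (FF p0 q0 b) \<le> suminf (FF p0 q0 a) \<Longrightarrow> suminf (FF p q b) \<le> suminf (FF p q a)"
    and "suminf (FF p0 q0 b) < suminf (FF p0 q0 a) \<Longrightarrow> suminf (FF p q b) < suminf (FF p q a)"
proof -
  have sd0: "summable (\<lambda>n. FF p0 q0 a n - FF p0 q0 b n)" using s by (intro summable_diff)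
  have sd: "summable (\<lambda>n. FF p q a n - FF p q b n)" using s by (intro summable_diff)
  have pos_case: "suminf (FF p q a) - suminf (FF p q b) \<ge> K * (suminf (FF p0 q0 a) - suminf (FF p0 q0 b))"
    if K: "\<And>n. FF p q a n - FF p q b n \<ge> K * (FF p0 q0 a n - FF p0 q0 b n)" for K
  proof -
    have "K * (suminf (FF p0 q0 a) - suminf (FF p0 q0 b)) = (\<Sum>n. K * (FF p0 q0 a n - FF p0 q0 b n))"
      using suminf_diff[OF s(1,2)] suminf_mult[OF sd0, of K] by simp
    also have "\<dots> \<le> (\<Sum>n. FF p q a n - FF p q b n)"
      using K sd sd0 by (intro suminf_le) (auto intro: summable_mult)
    also have "\<dots> = suminf (FF p q a) - suminf (FF p q b)" using suminf_diff[OF s(3,4)] by simp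
    finally show ?thesis .
  qed
  have zero_case: "(\<forall>n. FF p q a n = FF p q b n) \<and> suminf (FF p0 q0 a) = suminf (FF p0 q0 b)"
    if z: "a n0 = 0" and le: "suminf (FF p0 q0 b) \<le> suminf (FF p0 q0 a)"
  proof -
    have az: "a n = 0" "b n = 0" if "n \<ge> n0" for n
      using amono[OF that] z ann[of n] hi[OF that] bnn[of n] by auto
    define d where "d n = FF p0 q0 b n - FF p0 q0 a n" for n
    have dnn: "d n \<ge> 0" for n
    proof (cases "n < n0")
      case True
      then have "a n powr q0 \<le> b n powr q0" using lo ann pq by (intro powr_mono2) auto
      then show ?thesis unfolding d_def FF_def by (simp add: mult_right_mono)
    next
      case False then show ?thesis using az[of n] unfolding d_def FF_def by simp
    qed
    have sdd: "summable d" unfolding d_def using s by (intro summable_diff)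
    have "suminf d = suminf (FF p0 q0 b) - suminf (FF p0 q0 a)"
      unfolding d_def using suminf_diff[OF s(2,1)] by simp
    moreover have "suminf d \<ge> 0" using suminf_nonneg[OF sdd dnn] .
    ultimately have "suminf d = 0" using le by simp
    then have dz: "\<forall>n. d n = 0" using suminf_eq_zero_iff[OF sdd dnn] by simp
    have eqF: "FF p q a n = FF p q b n" for n
    proof -
      have "a n powr q0 = b n powr q0" using dz[rule_format, of n] unfolding d_def FF_def by simp
      then have "(a n powr q0) powr (q/q0) = (b n powr q0) powr (q/q0)" by simp
      then have "a n powr q = b n powr q" using pq by (simp add: powr_powr)
      then show ?thesis unfolding FF_def by simp
    qed
    have "suminf (FF p0 q0 a) = suminf (FF p0 q0 b)" using \<open>suminf d = 0\<close>
      \<open>suminf d = suminf (FF p0 q0 b) - suminf (FF p0 q0 a)\<close> by simp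
    with eqF show ?thesis by simp
  qed
  show "suminf (FF p0 q0 b) \<le> suminf (FF p0 q0 a) \<Longrightarrow> suminf (FF p q b) \<le> suminf (FF p q a)"
  proof -
    assume le: "suminf (FF p0 q0 b) \<le> suminf (FF p0 q0 a)"
    show ?thesis
    proof (cases "a n0 = 0")
      case True
      then have "\<forall>n. FF p q a n = FF p q b n" using zero_case le by blast
      then have "FF p q a = FF p q b" by auto
      then show ?thesis by simp
    next
      case False
      then have pos: "a n0 > 0" using ann[of n0] by simp
      note c = core_term[of a b n0 p q p0 q0, OF ann bnn amono lo hi pos pq]
      have "0 \<le> (q/q0) * (a n0 powr q0) powr (q/q0 - 1) * real (Suc n0) powr (q/p - q0/p0) * (suminf (FF p0 q0 a) - suminf (FF p0 q0 b))"
        using mult_nonneg_nonneg[OF less_imp_le[OF c(1)], of "suminf (FF p0 q0 a) - suminf (FF p0 q0 b)"] le by simp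
      also have "\<dots> \<le> suminf (FF p q a) - suminf (FF p q b)" by (rule pos_case) (rule c(2))
      finally show ?thesis by simp
    qed
  qed
  show "suminf (FF p0 q0 b) < suminf (FF p0 q0 a) \<Longrightarrow> suminf (FF p q b) < suminf (FF p q a)"
  proof -
    assume lt: "suminf (FF p0 q0 b) < suminf (FF p0 q0 a)"
    show ?thesis
    proof (cases "a n0 = 0")
      case True
      then show ?thesis using zero_case lt by force
    next
      case False
      then have pos: "a n0 > 0" using ann[of n0] by simp
      note c = core_term[of a b n0 p q p0 q0, OF ann bnn amono lo hi pos pq]
      have "0 < (q/q0) * (a n0 powr q0) powr (q/q0 - 1) * real (Suc n0) powr (q/p - q0/p0) * (suminf (FF p0 q0 a) - suminf (FF p0 q0 b))"
        using mult_pos_pos[OF c(1), of "suminf (FF p0 q0 a) - suminf (FF p0 q0 b)"] lt by simp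
      also have "\<dots> \<le> suminf (FF p q a) - suminf (FF p q b)" by (rule pos_case) (rule c(2))
      finally show ?thesis by simp
    qed
  qed
qed



lemma not_summable_Suc_powr:
  assumes "s > 0"
  shows "\<not> summable (\<lambda>n. real (Suc n) powr (s - 1))"
proof
  assume "summable (\<lambda>n. real (Suc n) powr (s - 1))"
  then have "summable (\<lambda>n. real n powr (s - 1))"
    using summable_Suc_iff[of "\<lambda>n. real n powr (s - 1)"] by simp
  then show False using summable_real_powr_iff assms by simp
qed

lemma emb:
  fixes a :: "nat \<Rightarrow> real"
  assumes apos: "\<And>n. 0 < a n"
    and amono: "\<And>m n. m \<le> n \<Longrightarrow> a n \<le> a m"
    and pq: "0 < p" "0 < q" "0 < p0" "0 < q0" "q \<le> q0" "q0 / p0 \<le> q / p"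
    and sa: "summable (FF p q a)"
  shows "summable (FF p0 q0 a)"
proof (rule ccontr)
  assume ns: "\<not> summable (FF p0 q0 a)"
  have ann: "\<And>n. 0 \<le> a n" using apos less_imp_le by blast
  have bound: "a 0 powr q * (\<Sum>i<N. real (Suc i) powr (q/p - 1)) \<le> suminf (FF p q a)" for N
  proof (cases "N = 0")
    case True then show ?thesis using suminf_nonneg[OF sa FF_nonneg] by simp
  next
    case False
    define b where "b n = (if n < N then a 0 else 0)" for n
    have bnn: "\<And>n. 0 \<le> b n" unfolding b_def using ann by simp
    have lo: "\<And>n. n < N \<Longrightarrow> a n \<le> b n" unfolding b_def using amono by simp
    have hi: "\<And>n. n \<ge> N \<Longrightarrow> b n \<le> a n" unfolding b_def using ann by simp
    note c = core_term[of a b N p q p0 q0, OF ann bnn amono lo hi apos pq]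
    define K where "K = (q/q0) * (a N powr q0) powr (q/q0 - 1) * real (Suc N) powr (q/p - q0/p0)"
    have K: "K > 0" "\<And>n. FF p q a n - FF p q b n \<ge> K * (FF p0 q0 a n - FF p0 q0 b n)"
      using c unfolding K_def by auto
    define C where "C = (\<Sum>i<N. FF p0 q0 b i)"
    have "\<exists>m. (\<Sum>i<m. FF p0 q0 a i) > C"
    proof (rule ccontr)
      assume "\<nexists>m. C < (\<Sum>i<m. FF p0 q0 a i)"
      then have "\<And>m. (\<Sum>i<m. FF p0 q0 a i) \<le> C" by (simp add: not_less)
      then have "summable (FF p0 q0 a)" using summableI_nonneg_bounded[of "FF p0 q0 a" C] FF_nonneg by blast
      with ns show False by simp
    qed
    then obtain m where m: "(\<Sum>i<m. FF p0 q0 a i) > C" by blast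
    define m' where "m' = max m N"
    have mm: "(\<Sum>i<m. FF p0 q0 a i) \<le> (\<Sum>i<m'. FF p0 q0 a i)"
      unfolding m'_def by (intro sum_mono2) (auto simp: FF_nonneg)
    have bz: "\<And>f :: real \<Rightarrow> nat \<Rightarrow> real. (\<Sum>i<m'. f (b i) i) = (\<Sum>i<N. f (b i) i) + (\<Sum>i\<in>{N..<m'}. f 0 i)"
    proof -
      fix f :: "real \<Rightarrow> nat \<Rightarrow> real"
      have "{..<m'} = {..<N} \<union> {N..<m'}" unfolding m'_def by auto
      then have "(\<Sum>i<m'. f (b i) i) = (\<Sum>i<N. f (b i) i) + (\<Sum>i\<in>{N..<m'}. f (b i) i)"
        by (simp add: sum.union_disjoint[of "{..<N}" "{N..<m'}"] ivl_disj_int)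
      also have "(\<Sum>i\<in>{N..<m'}. f (b i) i) = (\<Sum>i\<in>{N..<m'}. f 0 i)"
        unfolding b_def by (intro sum.cong) auto
      finally show "(\<Sum>i<m'. f (b i) i) = (\<Sum>i<N. f (b i) i) + (\<Sum>i\<in>{N..<m'}. f 0 i)" .
    qed
    have Fb0: "(\<Sum>i<m'. FF p0 q0 b i) = C"
      using bz[of "\<lambda>t i. t powr q0 * real (Suc i) powr (q0 / p0 - 1)"]
      unfolding C_def FF_def by simp
    have Fb: "(\<Sum>i<m'. FF p q b i) = (\<Sum>i<N. FF p q b i)"
      using bz[of "\<lambda>t i. t powr q * real (Suc i) powr (q / p - 1)"]
      unfolding FF_def by simp
    have pos: "(\<Sum>i<m'. FF p0 q0 a i - FF p0 q0 b i) \<ge> 0"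
      using m mm Fb0 by (simp add: sum_subtractf)
    have "K * (\<Sum>i<m'. FF p0 q0 a i - FF p0 q0 b i) \<le> (\<Sum>i<m'. FF p q a i - FF p q b i)"
      unfolding sum_distrib_left using K(2) by (intro sum_mono) auto
    moreover have "K * (\<Sum>i<m'. FF p0 q0 a i - FF p0 q0 b i) \<ge> 0" using K(1) pos by simp
    ultimately have "(\<Sum>i<m'. FF p q b i) \<le> (\<Sum>i<m'. FF p q a i)" by (simp add: sum_subtractf)
    also have "\<dots> \<le> suminf (FF p q a)" by (rule sum_le_suminf[OF sa]) (auto simp: FF_nonneg)
    finally have "(\<Sum>i<N. FF p q b i) \<le> suminf (FF p q a)" using Fb by simp
    moreover have "(\<Sum>i<N. FF p q b i) = a 0 powr q * (\<Sum>i<N. real (Suc i) powr (q/p - 1))"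
      unfolding sum_distrib_left FF_def b_def by (intro sum.cong) auto
    ultimately show ?thesis by simp
  qed
  have a0: "a 0 powr q > 0" using apos[of 0] by simp
  have "summable (\<lambda>n. real (Suc n) powr (q/p - 1))"
  proof (rule summableI_nonneg_bounded)
    fix N
    show "(\<Sum>i<N. real (Suc i) powr (q/p - 1)) \<le> suminf (FF p q a) / a 0 powr q"
      using bound[of N] a0 by (simp add: field_simps)
  qed simp
  then show False using not_summable_Suc_powr[of "q/p"] pq by simp
qed



lemma dec_rearr_props:
  fixes x :: "nat \<Rightarrow> real"
  assumes "x \<longlonglongrightarrow> 0"
  shows "\<And>n. 0 \<le> dec_rearr x n" "\<And>m n. m \<le> n \<Longrightarrow> dec_rearr x n \<le> dec_rearr x m"
proof -
  define S where "S n = {t. 0 \<le> t \<and> finite {k. t < \<bar>x k\<bar>} \<and> card {k. t < \<bar>x k\<bar>} \<le> n}" for n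
  have d: "dec_rearr x n = Inf (S n)" for n unfolding dec_rearr_def S_def by simp
  obtain B where B: "B > 0" "\<forall>k. norm (x k) \<le> B"
    using BseqE[OF convergent_imp_Bseq[OF convergentI[OF assms]]] by blast
  have Bk: "\<forall>k. \<bar>x k\<bar> \<le> B" using B by simp
  have "{k. B < \<bar>x k\<bar>} = {}" using Bk by (auto simp: not_less)
  then have Bin: "B \<in> S n" for n unfolding S_def using B by simp
  have ne: "S n \<noteq> {}" for n using Bin by blast
  have bdd: "bdd_below (S n)" for n unfolding S_def by (rule bdd_belowI[of _ 0]) auto
  show "\<And>n. 0 \<le> dec_rearr x n" unfolding d by (rule cInf_greatest[OF ne]) (auto simp: S_def)
  show "\<And>m n. m \<le> n \<Longrightarrow> dec_rearr x n \<le> dec_rearr x m"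
    unfolding d by (rule cInf_superset_mono[OF ne bdd]) (auto simp: S_def)
qed

lemma powr_inv_le_iff:
  fixes u v q :: real
  assumes "0 \<le> u" "0 \<le> v" "0 < q"
  shows "u powr (1/q) \<le> v powr (1/q) \<longleftrightarrow> u \<le> v"
proof
  assume h: "u powr (1/q) \<le> v powr (1/q)"
  show "u \<le> v"
  proof (rule ccontr)
    assume "\<not> u \<le> v"
    then have "v powr (1/q) < u powr (1/q)" using assms by (intro powr_less_mono2) auto
    with h show False by simp
  qed
qed (use assms in \<open>auto intro: powr_mono2\<close>)

lemma powr_inv_less_iff:
  fixes u v q :: real
  assumes "0 \<le> u" "0 \<le> v" "0 < q"
  shows "u powr (1/q) < v powr (1/q) \<longleftrightarrow> u < v"
  using powr_inv_le_iff[OF assms(2,1,3)] by linarith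

lemma emb':
  fixes a :: "nat \<Rightarrow> real"
  assumes ann: "\<And>n. 0 \<le> a n"
    and amono: "\<And>m n. m \<le> n \<Longrightarrow> a n \<le> a m"
    and pq: "0 < p" "0 < q" "0 < p0" "0 < q0" "q \<le> q0" "q0 / p0 \<le> q / p"
    and sa: "summable (FF p q a)"
  shows "summable (FF p0 q0 a)"
proof (cases "\<forall>n. 0 < a n")
  case True then show ?thesis using emb[OF _ amono pq sa] by blast
next
  case False
  then obtain N where "a N \<le> 0" by (auto simp: not_less)
  then have z: "a N = 0" using ann[of N] by simp
  have "FF p0 q0 a n = 0" if "n \<notin> {..<N}" for n
  proof -
    have "a n \<le> a N" using amono that by simp
    then have "a n = 0" using z ann[of n] by simp
    then show ?thesis unfolding FF_def using pq by simp
  qed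
  then show ?thesis by (intro summable_finite[of "{..<N}"]) auto
qed

lemma part12:
  fixes p0 q0 :: real
  assumes p0: "0 < p0" and q0: "0 < q0"
  shows
    "(\<forall>x y :: nat \<Rightarrow> real. \<forall>p q.
        x \<longlonglongrightarrow> 0 \<longrightarrow> y \<longlonglongrightarrow> 0 \<longrightarrow> lessgtr x y \<longrightarrow> (p, q) \<in> tDelta p0 q0 \<longrightarrow>
        lorentz_norm p0 q0 x \<ge> lorentz_norm p0 q0 y \<longrightarrow>
        lorentz_norm p q x \<ge> lorentz_norm p q y)
   \<and> (\<forall>x y :: nat \<Rightarrow> real. \<forall>p q.
        x \<longlonglongrightarrow> 0 \<longrightarrow> y \<longlonglongrightarrow> 0 \<longrightarrow> lessgtr x y \<longrightarrow> (p, q) \<in> tDelta p0 q0 \<longrightarrow>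
        lorentz_norm p q y < \<infinity> \<longrightarrow>
        lorentz_norm p0 q0 x > lorentz_norm p0 q0 y \<longrightarrow>
        lorentz_norm p q x > lorentz_norm p q y)"
proof (intro conjI allI impI)
  fix x y :: "nat \<Rightarrow> real" and p q :: real
  assume x: "x \<longlonglongrightarrow> 0" and y: "y \<longlonglongrightarrow> 0" and lg: "lessgtr x y" and T: "(p, q) \<in> tDelta p0 q0"
  define a where "a = dec_rearr x"
  define b where "b = dec_rearr y"
  from lg obtain n0 where lo0: "\<forall>n. n < n0 \<longrightarrow> a n \<le> b n" and hi0: "\<forall>n. n \<ge> n0 \<longrightarrow> b n \<le> a n"
    unfolding lessgtr_def a_def b_def by blast
  have lo: "\<And>n. n < n0 \<Longrightarrow> a n \<le> b n" using lo0 by blast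
  have hi: "\<And>n. n \<ge> n0 \<Longrightarrow> b n \<le> a n" using hi0 by blast
  have A: "\<And>n. 0 \<le> a n" "\<And>m n. m \<le> n \<Longrightarrow> a n \<le> a m"
    unfolding a_def using dec_rearr_props[OF x] by auto
  have B: "\<And>n. 0 \<le> b n" "\<And>m n. m \<le> n \<Longrightarrow> b n \<le> b m"
    unfolding b_def using dec_rearr_props[OF y] by auto
  have pq: "0 < p" "0 < q" "0 < p0" "0 < q0" "q \<le> q0" "q0 / p0 \<le> q / p"
    using T p0 q0 unfolding tDelta_def by auto
  have N: "lorentz_norm p q x = (if summable (FF p q a) then ereal (suminf (FF p q a) powr (1/q)) else \<infinity>)"
    "lorentz_norm p q y = (if summable (FF p q b) then ereal (suminf (FF p q b) powr (1/q)) else \<infinity>)"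
    "lorentz_norm p0 q0 x = (if summable (FF p0 q0 a) then ereal (suminf (FF p0 q0 a) powr (1/q0)) else \<infinity>)"
    "lorentz_norm p0 q0 y = (if summable (FF p0 q0 b) then ereal (suminf (FF p0 q0 b) powr (1/q0)) else \<infinity>)"
    unfolding lorentz_norm_FF a_def b_def by simp_all
  have tail: "summable (FF p q a) \<Longrightarrow> summable (FF p q b)"
    by (erule tail_summable[where ?n0.0=n0]) (use B(1) hi pq in auto)
  have embx: "summable (FF p q a) \<Longrightarrow> summable (FF p0 q0 a)"
    by (rule emb'[where a=a and p=p and q=q and ?p0.0=p0 and ?q0.0=q0]) (use A pq in auto)
  note cs = comp_sums[where a=a and b=b and ?n0.0=n0 and p=p and q=q and ?p0.0=p0 and ?q0.0=q0, OF A(1) B(1) A(2) lo hi pq]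
  have nn: "0 \<le> suminf (FF p q a)" "0 \<le> suminf (FF p q b)" "0 \<le> suminf (FF p0 q0 a)" "0 \<le> suminf (FF p0 q0 b)"
    if "summable (FF p q a)" "summable (FF p q b)" "summable (FF p0 q0 a)" "summable (FF p0 q0 b)"
    using that by (auto intro!: suminf_nonneg simp: FF_nonneg)
  {
    assume h: "lorentz_norm p0 q0 x \<ge> lorentz_norm p0 q0 y"
    show "lorentz_norm p q x \<ge> lorentz_norm p q y"
    proof (cases "summable (FF p q a)")
      case False then show ?thesis unfolding N by simp
    next
      case sa: True
      have sb: "summable (FF p q b)" using tail sa .
      have sa0: "summable (FF p0 q0 a)" using embx sa .
      show ?thesis
      proof (cases "summable (FF p0 q0 b)")
        case False then show ?thesis using h sa0 unfolding N by simp
      next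
        case sb0: True
        note n = nn[OF sa sb sa0 sb0]
        have "suminf (FF p0 q0 b) \<le> suminf (FF p0 q0 a)"
          using h sa0 sb0 powr_inv_le_iff[OF n(4) n(3) pq(4)] unfolding N by simp
        then have "suminf (FF p q b) \<le> suminf (FF p q a)" using cs(1) sa0 sb0 sa sb by blast
        then show ?thesis using sa sb powr_inv_le_iff[OF n(2) n(1) pq(2)] unfolding N by simp
      qed
    qed
  }
  {
    assume fin: "lorentz_norm p q y < \<infinity>" and h: "lorentz_norm p0 q0 x > lorentz_norm p0 q0 y"
    have sb: "summable (FF p q b)" using fin unfolding N by (auto split: if_splits)
    show "lorentz_norm p q x > lorentz_norm p q y"
    proof (cases "summable (FF p q a)")
      case False then show ?thesis using sb unfolding N by simp
    next
      case sa: True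
      have sa0: "summable (FF p0 q0 a)" using embx sa .
      have sb0: "summable (FF p0 q0 b)" using h unfolding N by (auto split: if_splits)
      note n = nn[OF sa sb sa0 sb0]
      have "suminf (FF p0 q0 b) < suminf (FF p0 q0 a)"
        using h sa0 sb0 powr_inv_less_iff[OF n(4) n(3) pq(4)] unfolding N by simp
      then have "suminf (FF p q b) < suminf (FF p q a)" using cs(2) sa0 sb0 sa sb by blast
      then show ?thesis using sa sb powr_inv_less_iff[OF n(2) n(1) pq(2)] unfolding N by simp
    qed
  }
qed



definition two :: "real \<Rightarrow> real \<Rightarrow> nat \<Rightarrow> real" where
  "two \<alpha> \<beta> = (\<lambda>k. if k = 0 then \<alpha> else if k = 1 then \<beta> else 0)"

lemma dec_two:
  assumes b: "0 < \<beta>" "\<beta> \<le> \<alpha>"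
  shows "dec_rearr (two \<alpha> \<beta>) n = (if n = 0 then \<alpha> else if n = 1 then \<beta> else 0)"
proof -
  have setq: "{k. t < \<bar>two \<alpha> \<beta> k\<bar>} = (if t < \<beta> then {0,1} else if t < \<alpha> then {0} else {})"
    if "0 \<le> t" for t
    using that b by (auto simp: two_def)
  have S: "{t. 0 \<le> t \<and> finite {k. t < \<bar>two \<alpha> \<beta> k\<bar>} \<and> card {k. t < \<bar>two \<alpha> \<beta> k\<bar>} \<le> n}
      = {(if n = 0 then \<alpha> else if n = 1 then \<beta> else 0)..}"
  proof (intro set_eqI iffI)
    fix t assume "t \<in> {t. 0 \<le> t \<and> finite {k. t < \<bar>two \<alpha> \<beta> k\<bar>} \<and> card {k. t < \<bar>two \<alpha> \<beta> k\<bar>} \<le> n}"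
    then have t: "0 \<le> t" "card {k. t < \<bar>two \<alpha> \<beta> k\<bar>} \<le> n" by auto
    show "t \<in> {(if n = 0 then \<alpha> else if n = 1 then \<beta> else 0)..}"
      using t b unfolding setq[OF t(1)] by (auto split: if_splits)
  next
    fix t assume "t \<in> {(if n = 0 then \<alpha> else if n = 1 then \<beta> else 0)..}"
    then have t: "(if n = 0 then \<alpha> else if n = 1 then \<beta> else 0) \<le> t" by simp
    then have t0: "0 \<le> t" using b by (auto split: if_splits)
    show "t \<in> {t. 0 \<le> t \<and> finite {k. t < \<bar>two \<alpha> \<beta> k\<bar>} \<and> card {k. t < \<bar>two \<alpha> \<beta> k\<bar>} \<le> n}"
      using t t0 b unfolding mem_Collect_eq setq[OF t0] by (auto split: if_splits)
  qed
  show ?thesis unfolding dec_rearr_def S by simp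
qed

definition HH :: "real \<Rightarrow> real \<Rightarrow> real \<Rightarrow> real \<Rightarrow> real" where
  "HH p q \<alpha> \<beta> = \<alpha> powr q + \<beta> powr q * 2 powr (q / p - 1)"

lemma norm_two:
  assumes b: "0 < \<beta>" "\<beta> \<le> \<alpha>"
  shows "lorentz_norm p q (two \<alpha> \<beta>) = ereal (HH p q \<alpha> \<beta> powr (1/q))"
proof -
  have F: "FF p q (dec_rearr (two \<alpha> \<beta>)) n = 0" if "n \<notin> {0,1}" for n
    using that unfolding FF_def dec_two[OF b] by simp
  have "summable (FF p q (dec_rearr (two \<alpha> \<beta>)))" by (rule summable_finite[of "{0,1}"]) (use F in auto)
  moreover have "suminf (FF p q (dec_rearr (two \<alpha> \<beta>))) = HH p q \<alpha> \<beta>"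
    using suminf_finite[of "{0,1}", OF _ F] unfolding FF_def HH_def dec_two[OF b] by simp
  ultimately show ?thesis unfolding lorentz_norm_FF by simp
qed

lemma HH_nonneg: "0 \<le> HH p q \<alpha> \<beta>" unfolding HH_def by simp



lemma deriv_HH:
  assumes "0 < \<rho>" "0 < q"
  shows "((\<lambda>e. HH p q (1 - r * e) (\<rho> + e)) has_real_derivative
     q * (2 powr (q/p - 1) * \<rho> powr (q - 1) - r)) (at 0)"
proof -
  have d1: "((\<lambda>e. 1 - r * e) has_real_derivative (0 - r * 1)) (at 0)"
    by (intro derivative_intros DERIV_cmult DERIV_ident)
  have d2: "((\<lambda>e. \<rho> + e) has_real_derivative (0 + 1)) (at 0)"
    by (intro derivative_intros)
  have e1: "((\<lambda>e. (1 - r * e) powr q) has_real_derivative q * (1 - r * 0) powr (q - real 1) * (0 - r * 1)) (at 0)"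
    by (rule DERIV_fun_powr[OF d1]) simp
  have e2: "((\<lambda>e. (\<rho> + e) powr q) has_real_derivative q * (\<rho> + 0) powr (q - real 1) * (0 + 1)) (at 0)"
    by (rule DERIV_fun_powr[OF d2]) (use assms in simp)
  have "((\<lambda>e. (1 - r * e) powr q + (\<rho> + e) powr q * 2 powr (q / p - 1)) has_real_derivative
     (q * (1 - r * 0) powr (q - real 1) * (0 - r * 1) + q * (\<rho> + 0) powr (q - real 1) * (0 + 1) * 2 powr (q / p - 1))) (at 0)"
    by (intro DERIV_add DERIV_cmult_right e1 e2)
  then show ?thesis unfolding HH_def by (simp add: algebra_simps)
qed

lemma part3:
  fixes p0 q0 :: real
  assumes p0: "0 < p0" and q0: "0 < q0"
  shows "\<forall>p q. 0 < p \<longrightarrow> 0 < q \<longrightarrow> (p, q) \<notin> tDelta p0 q0 \<longrightarrow>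
        (\<exists>x y :: nat \<Rightarrow> real.
           finite {k. x k \<noteq> 0} \<and> card {k. x k \<noteq> 0} \<le> 2 \<and>
           finite {k. y k \<noteq> 0} \<and> card {k. y k \<noteq> 0} \<le> 2 \<and>
           lessgtr x y \<and>
           lorentz_norm p0 q0 x > lorentz_norm p0 q0 y \<and>
           lorentz_norm p q x < lorentz_norm p q y)"
proof (intro allI impI)
  fix p q :: real
  assume p: "0 < p" and q: "0 < q" and nT: "(p, q) \<notin> tDelta p0 q0"
  define s where "s = q / p"
  define s0 where "s0 = q0 / p0"
  have "\<exists>t>0. s - s0 < t * (q - q0)"
  proof (cases "q > q0")
    case True
    define t where "t = \<bar>s - s0\<bar> / (q - q0) + 1"
    have "t * (q - q0) = \<bar>s - s0\<bar> + (q - q0)" unfolding t_def using True by (simp add: field_simps)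
    moreover have "t > 0" unfolding t_def using True by (simp add: add_nonneg_pos)
    ultimately show ?thesis using True by (intro exI[of _ t]) auto
  next
    case False
    have ss: "s < s0"
    proof (cases "p > p0")
      case True
      have "q / p < q / p0" using True p0 q by (simp add: divide_strict_left_mono)
      also have "\<dots> \<le> q0 / p0" using False p0 by (simp add: divide_right_mono)
      finally show ?thesis unfolding s_def s0_def .
    next
      case False2: False
      then show ?thesis using nT p q False unfolding tDelta_def s_def s0_def by auto
    qed
    define t where "t = (s0 - s) / (2 * (q0 - q + 1))"
    have t0: "t > 0" unfolding t_def using ss False by simp
    have "t * (q0 - q) < s0 - s"
    proof -
      have "(q0 - q) / (2 * (q0 - q + 1)) < 1" using False by (simp add: field_simps)
      then have "(s0 - s) * ((q0 - q) / (2 * (q0 - q + 1))) < (s0 - s) * 1" using ss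
        by (intro mult_strict_left_mono) auto
      then show ?thesis unfolding t_def by (simp add: field_simps)
    qed
    then show ?thesis using t0 by (intro exI[of _ t]) (auto simp: algebra_simps)
  qed
  then obtain t where t: "t > 0" "s - s0 < t * (q - q0)" by blast
  define \<rho> where "\<rho> = 2 powr (- t)"
  have \<rho>: "0 < \<rho>" "\<rho> < 1" unfolding \<rho>_def using t by (auto simp: powr_less_one)
  define D where "D = 2 powr (q/p - 1) * \<rho> powr (q - 1)"
  define E where "E = 2 powr (q0/p0 - 1) * \<rho> powr (q0 - 1)"
  have DE: "D < E"
  proof -
    have "D = 2 powr (s - 1 - t * (q - 1))" unfolding D_def \<rho>_def s_def
      by (simp add: powr_powr flip: powr_add)
    moreover have "E = 2 powr (s0 - 1 - t * (q0 - 1))" unfolding E_def \<rho>_def s0_def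
      by (simp add: powr_powr flip: powr_add)
    moreover have "s - 1 - t * (q - 1) < s0 - 1 - t * (q0 - 1)" using t(2) by (simp add: algebra_simps)
    ultimately show ?thesis by simp
  qed
  define r where "r = (D + E) / 2"
  have D0: "D > 0" unfolding D_def using \<rho> by simp
  have r: "D < r" "r < E" "0 < r" using DE D0 unfolding r_def by auto
  have d0: "((\<lambda>e. HH p0 q0 (1 - r * e) (\<rho> + e)) has_real_derivative q0 * (E - r)) (at 0)"
    using deriv_HH[OF \<rho>(1) q0, of p0 r] unfolding E_def .
  have d: "((\<lambda>e. HH p q (1 - r * e) (\<rho> + e)) has_real_derivative q * (D - r)) (at 0)"
    using deriv_HH[OF \<rho>(1) q, of p r] unfolding D_def .
  obtain d1 where d1: "d1 > 0" "\<And>h. h > 0 \<Longrightarrow> h < d1 \<Longrightarrow> HH p0 q0 (1 - r * 0) (\<rho> + 0) < HH p0 q0 (1 - r * (0 + h)) (\<rho> + (0 + h))"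
    using DERIV_pos_inc_right[OF d0] r q0 by auto
  obtain d2 where d2: "d2 > 0" "\<And>h. h > 0 \<Longrightarrow> h < d2 \<Longrightarrow> HH p q (1 - r * (0 + h)) (\<rho> + (0 + h)) < HH p q (1 - r * 0) (\<rho> + 0)"
    using DERIV_neg_dec_right[OF d] r q by (auto simp: mult_pos_neg)
  define m where "m = min (min d1 d2) ((1 - \<rho>) / (1 + r))"
  have m: "m > 0" "m \<le> d1" "m \<le> d2" "m \<le> (1 - \<rho>) / (1 + r)"
    unfolding m_def using d1(1) d2(1) \<rho> r by auto
  define h where "h = m / 2"
  have h: "h > 0" "h < d1" "h < d2" "h < (1 - \<rho>) / (1 + r)"
    unfolding h_def using m by linarith+
  have ord: "\<rho> + h \<le> 1 - r * h"
  proof -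
    have "h * (1 + r) < 1 - \<rho>" using h(4) r by (simp add: field_simps)
    then show ?thesis by (simp add: algebra_simps)
  qed
  define x where "x = two (1 - r * h) (\<rho> + h)"
  define y where "y = two 1 \<rho>"
  have bx: "0 < \<rho> + h" "\<rho> + h \<le> 1 - r * h" using \<rho> h ord by auto
  have by': "0 < \<rho>" "\<rho> \<le> 1" using \<rho> by auto
  have fin: "finite {k. two \<alpha> \<beta> k \<noteq> 0} \<and> card {k. two \<alpha> \<beta> k \<noteq> 0} \<le> 2" for \<alpha> \<beta>
  proof -
    have sub: "{k. two \<alpha> \<beta> k \<noteq> 0} \<subseteq> {0, 1}" unfolding two_def by auto
    have "card {k. two \<alpha> \<beta> k \<noteq> 0} \<le> card {0::nat, 1}" by (rule card_mono[OF _ sub]) simp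
    then show ?thesis using finite_subset[OF sub] by simp
  qed
  have lg: "lessgtr x y"
    unfolding lessgtr_def x_def y_def dec_two[OF bx] dec_two[OF by']
    using r h by (intro exI[of _ 1]) auto
  have n1: "lorentz_norm p0 q0 x > lorentz_norm p0 q0 y"
  proof -
    have "HH p0 q0 1 \<rho> < HH p0 q0 (1 - r * h) (\<rho> + h)" using d1(2)[OF h(1) h(2)] by simp
    then show ?thesis unfolding x_def y_def norm_two[OF bx] norm_two[OF by']
      using powr_inv_less_iff[OF HH_nonneg HH_nonneg q0] by simp
  qed
  have n2: "lorentz_norm p q x < lorentz_norm p q y"
  proof -
    have "HH p q (1 - r * h) (\<rho> + h) < HH p q 1 \<rho>" using d2(2)[OF h(1) h(3)] by simp
    then show ?thesis unfolding x_def y_def norm_two[OF bx] norm_two[OF by']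
      using powr_inv_less_iff[OF HH_nonneg HH_nonneg q] by simp
  qed
  show "\<exists>x y :: nat \<Rightarrow> real.
           finite {k. x k \<noteq> 0} \<and> card {k. x k \<noteq> 0} \<le> 2 \<and>
           finite {k. y k \<noteq> 0} \<and> card {k. y k \<noteq> 0} \<le> 2 \<and>
           lessgtr x y \<and>
           lorentz_norm p0 q0 x > lorentz_norm p0 q0 y \<and>
           lorentz_norm p q x < lorentz_norm p q y"
    using fin lg n1 n2 unfolding x_def y_def by blast
qed


theorem mainTheorem10:
  fixes p0 q0 :: real
  assumes "0 < p0" and "0 < q0"
  shows
    "(\<forall>x y :: nat \<Rightarrow> real. \<forall>p q.
        x \<longlonglongrightarrow> 0 \<longrightarrow> y \<longlonglongrightarrow> 0 \<longrightarrow> lessgtr x y \<longrightarrow> (p, q) \<in> tDelta p0 q0 \<longrightarrow>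
        lorentz_norm p0 q0 x \<ge> lorentz_norm p0 q0 y \<longrightarrow>
        lorentz_norm p q x \<ge> lorentz_norm p q y)
   \<and> (\<forall>x y :: nat \<Rightarrow> real. \<forall>p q.
        x \<longlonglongrightarrow> 0 \<longrightarrow> y \<longlonglongrightarrow> 0 \<longrightarrow> lessgtr x y \<longrightarrow> (p, q) \<in> tDelta p0 q0 \<longrightarrow>
        lorentz_norm p q y < \<infinity> \<longrightarrow>
        lorentz_norm p0 q0 x > lorentz_norm p0 q0 y \<longrightarrow>
        lorentz_norm p q x > lorentz_norm p q y)
   \<and> (\<forall>p q. 0 < p \<longrightarrow> 0 < q \<longrightarrow> (p, q) \<notin> tDelta p0 q0 \<longrightarrow>
        (\<exists>x y :: nat \<Rightarrow> real.
           finite {k. x k \<noteq> 0} \<and> card {k. x k \<noteq> 0} \<le> 2 \<and>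
           finite {k. y k \<noteq> 0} \<and> card {k. y k \<noteq> 0} \<le> 2 \<and>
           lessgtr x y \<and>
           lorentz_norm p0 q0 x > lorentz_norm p0 q0 y \<and>
           lorentz_norm p q x < lorentz_norm p q y))"
  using part12[OF assms] part3[OF assms] by blast

end
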